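(* In the Mandelbrot–Shepp model with any parameter $\alpha>0$, $$\mathbb{P}_\alpha(\mathcal{V}\neq\emptyset)=\mathbb{P}_\alpha\Big(\bigcap_{n=1}^\infty\big\{\mathcal{V}(\omega[\tfrac1n])\neq\emptyset\big\}\Big).$$
   Context: Mandelbrot–Shepp model: $\mathbb{S}^1=\mathbb{R}/\mathbb{Z}$ represented by $[0,1)$. Under $\mathbb{P}_\alpha$, $\omega=\sum_i\delta_{(x_i,y_i)}$ is a Poisson point process on $\mathbb{S}^1\times(0,\infty)$ with intensity $\alpha\,dx\otimes\frac{dy}{y^2}$. For $(x,y)$ let $\Pi(x,y)=[0,1)$ if $y>1$, $(x,x+y)$ if $y\le1$ and $x+y\le1$, and $(x,1)\cup[0,x+y-1)$ if $y\le1$ and $x+y>1$. For a configuration $\omega$, $\mathcal{C}(\omega)=\bigcup_i\Pi(x_i,y_i)$ and $\mathcal{V}(\omega)=[0,1)\setminus\mathcal{C}(\omega)$; $\mathcal{V}=\mathcal{V}(\omega)$. For $z>0$, the truncated configuration is $\omega[z]=\sum_i\delta_{(x_i,y_i)}\mathbf{1}\{y_i>z\}$. *)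

theory Defs
  imports "HOL-Probability.Probability"
begin

text \<open>Configurations are (locally finite away from y = 0) sets of points
  (x, y) in [0,1) x (0,oo). The circle S^1 = R/Z is represented by [0,1).\<close>

definition MS_dom :: "(real \<times> real) set" where
  "MS_dom = {0..<1} \<times> {0<..}"

definition MS_intensity :: "real \<Rightarrow> (real \<times> real) measure" where
  "MS_intensity \<alpha> =
     density lborel (\<lambda>p. ennreal (\<alpha> * indicator MS_dom p / (snd p)\<^sup>2))"

definition pcount :: "(real \<times> real) set \<Rightarrow> (real \<times> real) set \<Rightarrow> enat" where
  "pcount A \<omega> = (if finite (\<omega> \<inter> A) then enat (card (\<omega> \<inter> A)) else \<infinity>)"

definition MS_PPP :: "real \<Rightarrow> (real \<times> real) set measure \<Rightarrow> bool" where
  "MS_PPP \<alpha> M \<longleftrightarrow>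
     prob_space M \<and>
     (\<forall>\<omega>\<in>space M. \<omega> \<subseteq> MS_dom) \<and>
     (\<forall>A\<in>sets borel. pcount A \<in> measurable M (count_space UNIV)) \<and>
     (\<forall>A\<in>sets borel. A \<subseteq> MS_dom \<longrightarrow> emeasure (MS_intensity \<alpha>) A < \<infinity> \<longrightarrow>
        (\<forall>k::nat. measure M {\<omega>\<in>space M. pcount A \<omega> = enat k} =
           (measure (MS_intensity \<alpha>) A) ^ k / fact k * exp (- measure (MS_intensity \<alpha>) A))) \<and>
     (\<forall>(A :: nat \<Rightarrow> (real \<times> real) set) n.
        (\<forall>i<n. A i \<in> sets borel \<and> A i \<subseteq> MS_dom \<and> emeasure (MS_intensity \<alpha>) (A i) < \<infinity>) \<longrightarrow>
        disjoint_family_on A {..<n} \<longrightarrow>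
        prob_space.indep_vars M (\<lambda>_. count_space UNIV) (\<lambda>i \<omega>. pcount (A i) \<omega>) {..<n})"

definition Pi_arc :: "real \<Rightarrow> real \<Rightarrow> real set" where
  "Pi_arc x y =
     (if y > 1 then {0..<1}
      else if x + y \<le> 1 then {x<..<x + y}
      else {x<..<1} \<union> {0..<x + y - 1})"

definition covered :: "(real \<times> real) set \<Rightarrow> real set" where
  "covered \<omega> = (\<Union>(x, y)\<in>\<omega>. Pi_arc x y)"

definition uncovered :: "(real \<times> real) set \<Rightarrow> real set" where
  "uncovered \<omega> = {0..<1} - covered \<omega>"

definition truncate :: "(real \<times> real) set \<Rightarrow> real \<Rightarrow> (real \<times> real) set" where
  "truncate \<omega> z = {p \<in> \<omega>. snd p > z}"

end

theory Submission
  imports Defs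
begin


lemma local_arc:
  assumes "0 \<le> x" "x < 1" "0 < y" "0 \<le> t" "t < 1" "t \<in> Pi_arc x y"
  shows "\<exists>e>0. \<forall>x' y' s. 0 \<le> x' \<longrightarrow> x' < 1 \<longrightarrow> 0 < y' \<longrightarrow> \<bar>x'-x\<bar> < e \<longrightarrow> \<bar>y'-y\<bar> < e
     \<longrightarrow> 0 \<le> s \<longrightarrow> s < 1 \<longrightarrow> (\<bar>s-t\<bar> < e \<or> (t = 0 \<and> 1 - e < s)) \<longrightarrow> s \<in> Pi_arc x' y'"
proof (cases "y > 1")
  case True
  show ?thesis
    by (rule exI[of _ "y - 1"]) (use True in \<open>auto simp: Pi_arc_def abs_less_iff\<close>)
next
  case F1: False
  show ?thesis
  proof (cases "x + y \<le> 1")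
    case True
    with F1 assms have t: "x < t" "t < x + y" by (auto simp: Pi_arc_def)
    define e where "e = min (t-x) (x+y-t) / 3"
    show ?thesis
    proof (intro exI[of _ e] conjI allI impI)
      show "e > 0" using t by (simp add: e_def)
      fix x' y' s assume H: "0 \<le> x'" "x' < 1" "0 < y'" "\<bar>x'-x\<bar> < e" "\<bar>y'-y\<bar> < e" "0 \<le> s" "s < 1"
        "\<bar>s-t\<bar> < e \<or> (t = 0 \<and> 1 - e < s)"
      have b: "x - e < x'" "x' < x+e" "y-e<y'" "y'<y+e" "t - e < s" "s < t + e"
        using H t assms by (auto simp: abs_less_iff)
      have "e \<le> (t-x)/3" "e \<le> (x+y-t)/3" by (auto simp: e_def)
      then show "s \<in> Pi_arc x' y'" using b H unfolding Pi_arc_def by auto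
    qed
  next
    case False
    with F1 assms have t: "x < t \<or> t < x + y - 1" by (auto simp: Pi_arc_def)
    show ?thesis
    proof (cases "x < t")
      case True
      define e where "e = min (t-x) (x+y-1) / 3"
      show ?thesis
      proof (intro exI[of _ e] conjI allI impI)
        show "e > 0" using True False by (simp add: e_def)
        fix x' y' s assume H: "0 \<le> x'" "x' < 1" "0 < y'" "\<bar>x'-x\<bar> < e" "\<bar>y'-y\<bar> < e" "0 \<le> s" "s < 1"
          "\<bar>s-t\<bar> < e \<or> (t = 0 \<and> 1 - e < s)"
        have b: "x - e < x'" "x' < x+e" "y-e<y'" "y'<y+e" "t - e < s" "s < t + e"
          using H True assms by (auto simp: abs_less_iff)
        have "e \<le> (t-x)/3" "e \<le> (x+y-1)/3" by (auto simp: e_def)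
        then show "s \<in> Pi_arc x' y'" using b H unfolding Pi_arc_def by auto
      qed
    next
      case F2: False
      with t have t2: "t < x + y - 1" by auto
      define e where "e = min (x+y-1-t) (1-x) / 3"
      show ?thesis
      proof (intro exI[of _ e] conjI allI impI)
        show "e > 0" using t2 assms by (simp add: e_def)
        fix x' y' s assume H: "0 \<le> x'" "x' < 1" "0 < y'" "\<bar>x'-x\<bar> < e" "\<bar>y'-y\<bar> < e" "0 \<le> s" "s < 1"
          "\<bar>s-t\<bar> < e \<or> (t = 0 \<and> 1 - e < s)"
        have b: "x - e < x'" "x' < x+e" "y-e<y'" "y'<y+e" 
          using H by (auto simp: abs_less_iff)
        have c: "s < t + e \<or> 1 - e < s" using H by (auto simp: abs_less_iff)
        have "e \<le> (x+y-1-t)/3" "e \<le> (1-x)/3" by (auto simp: e_def)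
        then show "s \<in> Pi_arc x' y'" using b c H assms unfolding Pi_arc_def by auto
      qed
    qed
  qed
qed



definition LOC :: "real \<Rightarrow> real \<times> real \<Rightarrow> real \<Rightarrow> bool" where
  "LOC t q e \<longleftrightarrow> (\<forall>x' y' s. 0 \<le> x' \<longrightarrow> x' < 1 \<longrightarrow> 0 < y' \<longrightarrow> \<bar>x'-fst q\<bar> < e \<longrightarrow> \<bar>y'-snd q\<bar> < e
     \<longrightarrow> 0 \<le> s \<longrightarrow> s < 1 \<longrightarrow> (\<bar>s-t\<bar> < e \<or> (t = 0 \<and> 1 - e < s)) \<longrightarrow> s \<in> Pi_arc x' y')"

definition LOC2 :: "real \<Rightarrow> real \<times> real \<Rightarrow> real \<Rightarrow> bool" where
  "LOC2 t q e \<longleftrightarrow> (\<forall>x' y' s. 0 \<le> x' \<longrightarrow> x' < 1 \<longrightarrow> 0 < y' \<longrightarrow> \<bar>x'-fst q\<bar> < e \<longrightarrow> \<bar>y'-snd q\<bar> < e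
     \<longrightarrow> 0 \<le> s \<longrightarrow> s < 1 \<longrightarrow> \<bar>s-t\<bar> < e \<longrightarrow> s \<in> Pi_arc x' y')"

lemma cover_finite:
  assumes "\<omega> \<subseteq> MS_dom" "{0..<1} \<subseteq> covered \<omega>"
  shows "\<exists>T p e. finite T \<and> (\<forall>t\<in>T. p t \<in> \<omega> \<and> e t > 0 \<and> LOC2 t (p t) (e t))
           \<and> {0..<1} \<subseteq> (\<Union>t\<in>T. ball t (e t))"
proof -
  have "\<forall>t\<in>{0..<1::real}. \<exists>q e. q \<in> \<omega> \<and> e > 0 \<and> LOC t q e"
  proof
    fix t :: real assume t: "t \<in> {0..<1}"
    then obtain q where q: "q \<in> \<omega>" "t \<in> Pi_arc (fst q) (snd q)"
      using assms(2) unfolding covered_def by fastforce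
    have "q \<in> MS_dom" using q assms(1) by auto
    then have dq: "0 \<le> fst q" "fst q < 1" "0 < snd q" by (auto simp: MS_dom_def)
    have "\<exists>e>0. LOC t q e" unfolding LOC_def
      by (rule local_arc) (use dq t q in auto)
    then obtain e where "e > 0" "LOC t q e" by blast
    with q show "\<exists>q e. q \<in> \<omega> \<and> e > 0 \<and> LOC t q e" by blast
  qed
  then obtain P E where PE: "\<And>t. t \<in> {0..<1} \<Longrightarrow> P t \<in> \<omega> \<and> E t > 0 \<and> LOC t (P t) (E t)"
    by metis
  define p where "p t = P (if t = 1 then 0 else t)" for t :: real
  define e where "e t = E (if t = 1 then 0 else t)" for t :: real
  have good: "p t \<in> \<omega> \<and> e t > 0 \<and> LOC2 t (p t) (e t)" if "t \<in> {0..1}" for t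
  proof (cases "t = 1")
    case True
    have "P 0 \<in> \<omega> \<and> E 0 > 0 \<and> LOC 0 (P 0) (E 0)" using PE[of 0] by simp
    then show ?thesis using True unfolding p_def e_def LOC_def LOC2_def
      by (auto simp: abs_less_iff)
  next
    case False
    then have "t \<in> {0..<1}" using that by auto
    from PE[OF this] show ?thesis using False unfolding p_def e_def LOC_def LOC2_def
      by auto
  qed
  have cov: "{0..1::real} \<subseteq> (\<Union>t\<in>{0..1}. ball t (e t))"
    using good by force
  have cpt: "compact {0..1::real}" by simp
  obtain T where T: "T \<subseteq> {0..1}" "finite T" "{0..1::real} \<subseteq> (\<Union>t\<in>T. ball t (e t))"
    using compactE_image[OF cpt _ cov] by blast
  show ?thesis
    apply (rule exI[of _ T], rule exI[of _ p], rule exI[of _ e])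
    using T good by auto
qed



definition rbox :: "rat \<times> rat \<times> rat \<times> rat \<Rightarrow> (real \<times> real) set" where
  "rbox q = (case q of (a,b,c,d) \<Rightarrow> {of_rat a<..<of_rat b} \<times> {of_rat c<..<of_rat d})"

definition goodL :: "(rat \<times> rat \<times> rat \<times> rat) list \<Rightarrow> bool" where
  "goodL L \<longleftrightarrow> (\<forall>\<omega>'. \<omega>' \<subseteq> MS_dom \<longrightarrow> (\<forall>q\<in>set L. \<omega>' \<inter> rbox q \<noteq> {}) \<longrightarrow> {0..<1} \<subseteq> covered \<omega>')"

lemma rat_between: "(u::real) < v \<Longrightarrow> \<exists>r::rat. u < of_rat r \<and> of_rat r < v"
  by (metis Rats_cases Rats_dense_in_real)

lemma rat_box:
  assumes "e > 0"
  shows "\<exists>q. (x,y) \<in> rbox q \<and> (\<forall>x' y'. (x',y') \<in> rbox q \<longrightarrow> \<bar>x'-x\<bar> < e \<and> \<bar>y'-y\<bar> < e)"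
proof -
  obtain a where a: "x - e < of_rat a" "of_rat a < x" using rat_between[of "x-e" x] assms by auto
  obtain b where b: "x < of_rat b" "of_rat b < x + e" using rat_between[of x "x+e"] assms by auto
  obtain c where c: "y - e < of_rat c" "of_rat c < y" using rat_between[of "y-e" y] assms by auto
  obtain d where d: "y < of_rat d" "of_rat d < y + e" using rat_between[of y "y+e"] assms by auto
  show ?thesis
    by (rule exI[of _ "(a,b,c,d)"]) (use a b c d in \<open>auto simp: rbox_def abs_less_iff\<close>)
qed

lemma covered_mono: "A \<subseteq> B \<Longrightarrow> covered A \<subseteq> covered B"
  unfolding covered_def by auto

lemma char:
  assumes "\<omega> \<subseteq> MS_dom"
  shows "{0..<1} \<subseteq> covered \<omega> \<longleftrightarrow> (\<exists>L. goodL L \<and> (\<forall>q\<in>set L. \<omega> \<inter> rbox q \<noteq> {}))"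
proof
  assume "\<exists>L. goodL L \<and> (\<forall>q\<in>set L. \<omega> \<inter> rbox q \<noteq> {})"
  then show "{0..<1} \<subseteq> covered \<omega>" using assms unfolding goodL_def by blast
next
  assume cov: "{0..<1} \<subseteq> covered \<omega>"
  obtain T p e where T: "finite T" "\<And>t. t\<in>T \<Longrightarrow> p t \<in> \<omega> \<and> e t > 0 \<and> LOC2 t (p t) (e t)"
    "{0..<1} \<subseteq> (\<Union>t\<in>T. ball t (e t))"
    using cover_finite[OF assms cov] by blast
  define R where "R t q \<longleftrightarrow> p t \<in> rbox q \<and> (\<forall>x' y'. (x',y') \<in> rbox q \<longrightarrow> \<bar>x'-fst (p t)\<bar> < e t \<and> \<bar>y'-snd (p t)\<bar> < e t)" for t q
  have ex: "\<forall>t\<in>T. \<exists>q. R t q"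
  proof
    fix t assume "t \<in> T"
    then have "e t > 0" using T(2) by blast
    from rat_box[OF this, of "fst (p t)" "snd (p t)"]
    show "\<exists>q. R t q" unfolding R_def by simp
  qed
  obtain Q where Q0: "\<forall>t\<in>T. R t (Q t)"
    using bchoice[OF ex] by (elim exE) simp
  have Q: "\<And>t. t \<in> T \<Longrightarrow> p t \<in> rbox (Q t) \<and> (\<forall>x' y'. (x',y') \<in> rbox (Q t) \<longrightarrow> \<bar>x'-fst (p t)\<bar> < e t \<and> \<bar>y'-snd (p t)\<bar> < e t)"
    using Q0 unfolding R_def by blast
  obtain L where L: "set L = Q ` T" using finite_list[OF finite_imageI[OF T(1), of Q]] by blast
  have "goodL L" unfolding goodL_def
  proof (intro allI impI subsetI)
    fix \<omega>' s assume w: "\<omega>' \<subseteq> MS_dom" "\<forall>q\<in>set L. \<omega>' \<inter> rbox q \<noteq> {}" and s: "s \<in> {0..<(1::real)}"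
    then obtain t where t: "t \<in> T" "s \<in> ball t (e t)" using T(3) by blast
    have "Q t \<in> set L" using L t(1) by blast
    then have "\<omega>' \<inter> rbox (Q t) \<noteq> {}" using w(2) by blast
    then obtain x' y' where xy: "(x',y') \<in> \<omega>'" "(x',y') \<in> rbox (Q t)" by auto
    have "(x',y') \<in> MS_dom" using w(1) xy(1) by blast
    then have d: "0 \<le> x'" "x' < 1" "0 < y'" by (auto simp: MS_dom_def)
    have hs: "\<bar>s - t\<bar> < e t" using t by (simp add: dist_real_def abs_minus_commute)
    have L2: "LOC2 t (p t) (e t)" using T(2)[OF t(1)] by blast
    have bx: "\<bar>x'-fst (p t)\<bar> < e t" "\<bar>y'-snd (p t)\<bar> < e t" using Q[OF t(1)] xy(2) by blast+
    have s01: "0 \<le> s" "s < 1" using s by auto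
    have "s \<in> Pi_arc x' y'"
      using L2[unfolded LOC2_def, rule_format, OF d bx s01 hs] .
    then show "s \<in> covered \<omega>'" using xy unfolding covered_def by auto
  qed
  moreover have "\<forall>q\<in>set L. \<omega> \<inter> rbox q \<noteq> {}"
  proof
    fix q assume "q \<in> set L"
    then obtain t where t: "t \<in> T" "q = Q t" using L by blast
    then have "p t \<in> \<omega>" "p t \<in> rbox q" using T(2) Q by blast+
    then show "\<omega> \<inter> rbox q \<noteq> {}" by blast
  qed
  ultimately show "\<exists>L. goodL L \<and> (\<forall>q\<in>set L. \<omega> \<inter> rbox q \<noteq> {})" by blast
qed

lemma finite_pos_n:
  assumes "finite F" "\<forall>q\<in>F. snd q > (0::real)"
  shows "\<exists>n::nat\<ge>1. \<forall>q\<in>F. 1 / real n < snd q"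
  using assms
proof (induction F rule: finite_induct)
  case empty then show ?case by (auto intro: exI[of _ 1])
next
  case (insert a F)
  then obtain n where n: "n \<ge> 1" "\<forall>q\<in>F. 1 / real n < snd q" by auto
  obtain m :: nat where m: "m > 0" "inverse (real m) < snd a" using ex_inverse_of_nat_less[of "snd a"] insert.prems by auto
  define k where "k = max n m"
  have "1 / real k \<le> 1 / real n" "1 / real k \<le> 1 / real m" using n m
    by (auto simp: k_def frac_le)
  then show ?case using n m by (intro exI[of _ k]) (auto simp: k_def inverse_eq_divide)
qed

lemma trunc_iff:
  assumes "\<omega> \<subseteq> MS_dom"
  shows "(\<forall>n::nat\<ge>1. uncovered (truncate \<omega> (1 / real n)) \<noteq> {}) \<longleftrightarrow> uncovered \<omega> \<noteq> {}"
proof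
  assume "uncovered \<omega> \<noteq> {}"
  moreover have "uncovered \<omega> \<subseteq> uncovered (truncate \<omega> z)" for z
    using covered_mono[of "truncate \<omega> z" \<omega>] unfolding uncovered_def truncate_def by auto
  ultimately show "\<forall>n::nat\<ge>1. uncovered (truncate \<omega> (1 / real n)) \<noteq> {}" by blast
next
  assume A: "\<forall>n::nat\<ge>1. uncovered (truncate \<omega> (1 / real n)) \<noteq> {}"
  show "uncovered \<omega> \<noteq> {}"
  proof
    assume "uncovered \<omega> = {}"
    then have cov: "{0..<1} \<subseteq> covered \<omega>" unfolding uncovered_def by auto
    obtain T p e where T: "finite T" "\<And>t. t\<in>T \<Longrightarrow> p t \<in> \<omega> \<and> e t > 0 \<and> LOC2 t (p t) (e t)"
      "{0..<1} \<subseteq> (\<Union>t\<in>T. ball t (e t))"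
      using cover_finite[OF assms cov] by blast
    have Fsub: "p ` T \<subseteq> \<omega>" using T(2) by auto
    have "\<forall>q\<in>p ` T. snd q > 0"
    proof
      fix q assume "q \<in> p ` T"
      then have "q \<in> MS_dom" using Fsub assms by blast
      then show "snd q > 0" by (cases q) (auto simp: MS_dom_def)
    qed
    then obtain n :: nat where n: "n \<ge> 1" "\<forall>q\<in>p ` T. 1 / real n < snd q"
      using finite_pos_n[of "p ` T"] T(1) by auto
    have "p ` T \<subseteq> truncate \<omega> (1 / real n)" using Fsub n unfolding truncate_def by auto
    have "{0..<1} \<subseteq> covered (p ` T)"
    proof
      fix s :: real assume s: "s \<in> {0..<1}"
      then obtain t where t: "t \<in> T" "s \<in> ball t (e t)" using T(3) by blast
      have "p t \<in> MS_dom" using T(2)[OF t(1)] assms by auto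
      then have d: "0 \<le> fst (p t)" "fst (p t) < 1" "0 < snd (p t)" by (auto simp: MS_dom_def)
      have "\<bar>s - t\<bar> < e t" using t by (simp add: dist_real_def abs_minus_commute)
      then have "s \<in> Pi_arc (fst (p t)) (snd (p t))" using T(2)[OF t(1)] d s unfolding LOC2_def by auto
      then show "s \<in> covered (p ` T)" using t unfolding covered_def
        by (auto intro!: bexI[of _ "p t"] simp: case_prod_beta)
    qed
    then have "{0..<1} \<subseteq> covered (truncate \<omega> (1 / real n))"
      using covered_mono[OF \<open>p ` T \<subseteq> truncate \<omega> (1 / real n)\<close>] by auto
    then have "uncovered (truncate \<omega> (1 / real n)) = {}" unfolding uncovered_def by auto
    with A n show False by auto
  qed
qed

lemma pcount_ne0: "pcount A \<omega> \<noteq> 0 \<longleftrightarrow> \<omega> \<inter> A \<noteq> {}"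
  unfolding pcount_def by (auto simp: zero_enat_def)



theorem mainTheorem14:
  fixes \<alpha> :: real and M :: "(real \<times> real) set measure"
  assumes "\<alpha> > 0" and "MS_PPP \<alpha> M"
  shows "{\<omega>\<in>space M. uncovered \<omega> \<noteq> {}} \<in> sets M \<and>
         {\<omega>\<in>space M. \<forall>n::nat\<ge>1. uncovered (truncate \<omega> (1 / real n)) \<noteq> {}} \<in> sets M \<and>
         measure M {\<omega>\<in>space M. uncovered \<omega> \<noteq> {}} =
         measure M {\<omega>\<in>space M. \<forall>n::nat\<ge>1. uncovered (truncate \<omega> (1 / real n)) \<noteq> {}}"
proof -
  have dom0: "\<forall>\<omega>\<in>space M. \<omega> \<subseteq> MS_dom" and meas0: "\<forall>A\<in>sets borel. pcount A \<in> measurable M (count_space UNIV)"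
    using conjunct1[OF conjunct2[OF assms(2)[unfolded MS_PPP_def]]]
      conjunct1[OF conjunct2[OF conjunct2[OF assms(2)[unfolded MS_PPP_def]]]] by auto
  have dom: "\<And>\<omega>. \<omega> \<in> space M \<Longrightarrow> \<omega> \<subseteq> MS_dom" using dom0 by blast
  have meas: "\<And>A. A \<in> sets borel \<Longrightarrow> pcount A \<in> measurable M (count_space UNIV)" using meas0 by blast
  have eq: "{\<omega>\<in>space M. \<forall>n::nat\<ge>1. uncovered (truncate \<omega> (1 / real n)) \<noteq> {}} = {\<omega>\<in>space M. uncovered \<omega> \<noteq> {}}"
  proof (rule Collect_cong)
    fix \<omega>
    show "(\<omega> \<in> space M \<and> (\<forall>n::nat\<ge>1. uncovered (truncate \<omega> (1 / real n)) \<noteq> {})) = (\<omega> \<in> space M \<and> uncovered \<omega> \<noteq> {})"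
    proof (cases "\<omega> \<in> space M")
      case True
      show ?thesis using trunc_iff[OF dom[OF True]] True by simp
    qed simp
  qed
  have box_sets: "{\<omega>\<in>space M. pcount (rbox q) \<omega> \<noteq> 0} \<in> sets M" for q
  proof -
    obtain a b c d where q: "q = (a,b,c,d)" by (rule prod_cases4)
    have "rbox q \<in> sets borel" unfolding rbox_def q by (auto intro!: borel_open open_Times)
    then have m: "pcount (rbox q) \<in> measurable M (count_space UNIV)" by (rule meas)
    have "{\<omega>\<in>space M. pcount (rbox q) \<omega> \<noteq> 0} = pcount (rbox q) -` (UNIV - {0}) \<inter> space M" by blast
    also have "\<dots> \<in> sets M" using measurable_sets[OF m, of "UNIV - {0}"] by simp
    finally show ?thesis .
  qed
  have cov_eq: "{\<omega>\<in>space M. uncovered \<omega> = {}} = {\<omega>\<in>space M. \<exists>L. goodL L \<and> (\<forall>q\<in>set L. pcount (rbox q) \<omega> \<noteq> 0)}"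
  proof (rule Collect_cong)
    fix \<omega>
    show "(\<omega> \<in> space M \<and> uncovered \<omega> = {}) = (\<omega> \<in> space M \<and> (\<exists>L. goodL L \<and> (\<forall>q\<in>set L. pcount (rbox q) \<omega> \<noteq> 0)))"
    proof (cases "\<omega> \<in> space M")
      case True
      have "uncovered \<omega> = {} \<longleftrightarrow> {0..<1} \<subseteq> covered \<omega>" unfolding uncovered_def by blast
      then show ?thesis using char[OF dom[OF True]] True unfolding pcount_ne0 by simp
    qed simp
  qed
  have fin: "{\<omega>\<in>space M. \<forall>q\<in>set L. pcount (rbox q) \<omega> \<noteq> 0} \<in> sets M" for L
  proof -
    have bs: "\<And>q. q \<in> set L \<Longrightarrow> {\<omega>\<in>space M. pcount (rbox q) \<omega> \<noteq> 0} \<in> sets M"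
      using box_sets by blast
    show ?thesis by (rule sets.sets_Collect_finite_All[OF bs List.finite_set])
  qed
  have U: "{\<omega>\<in>space M. \<exists>L. goodL L \<and> (\<forall>q\<in>set L. pcount (rbox q) \<omega> \<noteq> 0)}
      = (\<Union>L\<in>{L. goodL L}. {\<omega>\<in>space M. \<forall>q\<in>set L. pcount (rbox q) \<omega> \<noteq> 0})"
    by blast
  have "(\<Union>L\<in>{L. goodL L}. {\<omega>\<in>space M. \<forall>q\<in>set L. pcount (rbox q) \<omega> \<noteq> 0}) \<in> sets M"
    by (rule countable_Un_Int(1)) (rule fin)
  then have "{\<omega>\<in>space M. \<exists>L. goodL L \<and> (\<forall>q\<in>set L. pcount (rbox q) \<omega> \<noteq> 0)} \<in> sets M"
    by (subst U)
  then have "space M - {\<omega>\<in>space M. uncovered \<omega> = {}} \<in> sets M" using cov_eq by auto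
  moreover have "space M - {\<omega>\<in>space M. uncovered \<omega> = {}} = {\<omega>\<in>space M. uncovered \<omega> \<noteq> {}}" by blast
  ultimately have S: "{\<omega>\<in>space M. uncovered \<omega> \<noteq> {}} \<in> sets M" by simp
  show ?thesis using S eq by simp
qed

end
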